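(* Let $M=M(S^2;\frac{q_1}{p_1},\frac{q_2}{p_2},\frac{q_3}{p_3})$ with $e(M)\neq0$. (a) The number of abelian $\mathrm{SL}_2(\mathbb{C})$-characters of $M$ is $\frac12\big(|H_1(M,\mathbb{Z})|+|H_1(M,\mathbb{Z}/2\mathbb{Z})|\big)$. (b) $|H_1(M,\mathbb{Z})|=|p_1p_2q_3+p_1q_2p_3+q_1p_2p_3|=p_1p_2p_3|e(M)|$, and $|H_1(M,\mathbb{Z}/2\mathbb{Z})|$ equals $4$ if $2$ divides each of $p_1,p_2,p_3$; equals $2$ if $2$ divides $p_1p_2p_3|e(M)|$ but not all of $p_1,p_2,p_3$ are even; and equals $1$ otherwise.
   Context: $M(S^2;\frac{q_1}{p_1},\frac{q_2}{p_2},\frac{q_3}{p_3})$ (with $(p_i,q_i)$ coprime, $p_i\ge1$) is the closed Seifert manifold obtained from $S_{0,3}\times S^1$ by gluing solid tori $V_i$ along the boundary tori $c_i\times S^1$ so that the meridian of $V_i$ is $p_ic_i+q_ih_i$ in homology ($c_i$ the boundary circles of the three-holed sphere $S_{0,3}$, $h_i$ an $S^1$-fiber on $c_i\times S^1$); $e(M)=\sum_i q_i/p_i$. Its fundamental group is $\langle c_1,c_2,c_3,h\mid [c_i,h]=1=c_i^{p_i}h^{q_i}\ (i=1,2,3),\ c_1c_2c_3=1\rangle$. An $\mathrm{SL}_2(\mathbb{C})$-character of $M$ is abelian if it is the trace of a diagonal representation $\pi_1(M)\to\mathrm{SL}_2(\mathbb{C})$. *)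

theory Defs
  imports Complex_Main
begin

text \<open>Generators of pi_1(M): c1, c2, c3, h.  A word in the free group on them
  is a list of letters (g, inv), where inv = True means the letter g^-1.\<close>

datatype gen = C1 | C2 | C3 | H

type_synonym word = "(gen \<times> bool) list"

definition gpow :: "gen \<Rightarrow> int \<Rightarrow> word" where
  "gpow g k = replicate (nat \<bar>k\<bar>) (g, k < 0)"

definition commw :: "gen \<Rightarrow> gen \<Rightarrow> word" where
  "commw a b = [(a, False), (b, False), (a, True), (b, True)]"

definition seif_rels :: "int \<Rightarrow> int \<Rightarrow> int \<Rightarrow> int \<Rightarrow> int \<Rightarrow> int \<Rightarrow> word list" where
  "seif_rels p1 q1 p2 q2 p3 q3 =
     [commw C1 H, commw C2 H, commw C3 H,
      gpow C1 p1 @ gpow H q1, gpow C2 p2 @ gpow H q2, gpow C3 p3 @ gpow H q3,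
      [(C1, False), (C2, False), (C3, False)]]"

text \<open>Value of a word under an assignment of generators to nonzero complex
  numbers (a diagonal entry of the image matrices).\<close>
definition word_val :: "(gen \<Rightarrow> complex) \<Rightarrow> word \<Rightarrow> complex" where
  "word_val f w = prod_list (map (\<lambda>l. if snd l then inverse (f (fst l)) else f (fst l)) w)"

text \<open>A diagonal representation pi_1 -> SL_2(C): each generator g goes to
  diag(a g, d g) with determinant a g * d g = 1, and every relator goes to the
  identity matrix (products and inverses of diagonal matrices are computed
  entrywise).\<close>
definition diag_rep :: "word list \<Rightarrow> (gen \<Rightarrow> complex) \<Rightarrow> (gen \<Rightarrow> complex) \<Rightarrow> bool" where
  "diag_rep rels a d \<longleftrightarrow> (\<forall>g. a g * d g = 1) \<and>
     (\<forall>r \<in> set rels. word_val a r = 1 \<and> word_val d r = 1)"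

text \<open>Abelian characters: traces of diagonal representations, viewed as
  functions on words (equivalently on group elements, since words surject).\<close>
definition abelian_chars :: "word list \<Rightarrow> (word \<Rightarrow> complex) set" where
  "abelian_chars rels =
     {(\<lambda>w. word_val a w + word_val d w) | a d. diag_rep rels a d}"

definition ab_vec :: "word \<Rightarrow> gen \<Rightarrow> int" where
  "ab_vec w g = (\<Sum>l\<leftarrow>w. if fst l = g then (if snd l then -1 else 1) else 0)"

definition rel_lattice :: "nat \<Rightarrow> word list \<Rightarrow> (gen \<Rightarrow> int) set" where
  "rel_lattice n rels =
     {v. \<exists>(c::nat \<Rightarrow> int) (u::gen \<Rightarrow> int).
           v = (\<lambda>g. (\<Sum>i<length rels. c i * ab_vec (rels ! i) g) + int n * u g)}"

text \<open>Order of H_1(M; Z/nZ) = pi_1(M)^ab \<otimes> Z/nZ  (n = 0 gives Z coefficients):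
  the cardinality of Z^4 modulo rel_lattice n rels.\<close>
definition H1_card :: "nat \<Rightarrow> word list \<Rightarrow> nat" where
  "H1_card n rels = card ((UNIV :: (gen \<Rightarrow> int) set) //
                          {(v, w). v - w \<in> rel_lattice n rels})"

end

theory Submission
  imports Defs
begin


lemma dvd_small:
  fixes a b g :: int
  assumes "g dvd a - b" "0 \<le> a" "a < g" "0 \<le> b" "b < g"
  shows "a = b"
proof -
  obtain c where c: "a - b = g*c" using assms(1) by (auto elim: dvdE)
  have "g > 0" using assms by simp
  consider "c \<ge> 1" | "c \<le> -1" | "c = 0" by linarith
  thus ?thesis
  proof cases
    case 1 hence "g*c \<ge> g*1" using \<open>g>0\<close> by (intro mult_left_mono) auto
    hence "a - b \<ge> g" using c by simp
    thus ?thesis using assms by linarith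
  next
    case 2 hence "g*c \<le> g*(-1)" using \<open>g>0\<close> by (intro mult_left_mono) auto
    hence "a - b \<le> -g" using c by simp
    thus ?thesis using assms by linarith
  qed (use c in simp)
qed

lemma hnf_reps:
  fixes P :: "int \<Rightarrow> int \<Rightarrow> bool"
  assumes comb: "\<And>x y x' y' k l. P x y \<Longrightarrow> P x' y' \<Longrightarrow> P (k*x + l*x') (k*y + l*y')"
    and g: "g > 0" and m: "m > 0" and Pg: "P g y0" and Pm: "P 0 m"
    and dg: "\<And>x y. P x y \<Longrightarrow> g dvd x" and dm: "\<And>y. P 0 y \<Longrightarrow> m dvd y"
  shows "\<exists>!s. s \<in> {0..<g} \<times> {0..<m} \<and> P (x - fst s) (y - snd s)"
proof -
  define k where "k = x div g"
  define r where "r = x mod g"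
  define l where "l = (y - k*y0) div m"
  define r' where "r' = (y - k*y0) mod m"
  have ex: "P (x - r) (y - r')"
  proof -
    have "x - r = k*g + l*0" unfolding k_def r_def by (simp add: div_mult_mod_eq minus_mod_eq_mult_div)
    moreover have "y - r' = k*y0 + l*m" unfolding l_def r'_def
      using minus_mod_eq_mult_div[of "y - k*y0" m] by (simp add: algebra_simps)
    ultimately show ?thesis using comb[OF Pg Pm, of k l] by simp
  qed
  have rr: "(r, r') \<in> {0..<g} \<times> {0..<m}" unfolding r_def r'_def using g m by auto
  show ?thesis
  proof (rule ex1I[of _ "(r,r')"])
    show "(r, r') \<in> {0..<g} \<times> {0..<m} \<and> P (x - fst (r, r')) (y - snd (r, r'))" using ex rr by simp
  next
    fix s assume s: "s \<in> {0..<g} \<times> {0..<m} \<and> P (x - fst s) (y - snd s)"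
    obtain s1 s2 where ss: "s = (s1,s2)" by force
    have P1: "P (s1 - r) (s2 - r')" using comb[OF ex s[THEN conjunct2], of 1 "-1"] ss by simp
    have "g dvd (s1 - r)" using dg[OF P1] .
    moreover have "0 \<le> s1" "s1 < g" "0 \<le> r" "r < g" using s ss rr by auto
    ultimately have e1: "s1 = r"
      by (rule dvd_small)
    hence "P 0 (s2 - r')" using P1 by simp
    hence "m dvd (s2 - r')" by (rule dm)
    moreover have "0 \<le> s2" "s2 < m" "0 \<le> r'" "r' < m" using s ss rr by auto
    ultimately have "s2 = r'"
      by (rule dvd_small)
    thus "s = (r, r')" using e1 ss by simp
  qed
qed



definition inL2 :: "int \<Rightarrow> int \<Rightarrow> int \<Rightarrow> int \<Rightarrow> int \<Rightarrow> int \<Rightarrow> int \<Rightarrow> bool" where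
 "inL2 n a b c d x y \<longleftrightarrow> (\<exists>i j k l. x = i*a + j*c + n*k \<and> y = i*b + j*d + n*l)"

lemma inL2_comb:
  assumes "inL2 n a b c d x y" "inL2 n a b c d x' y'"
  shows "inL2 n a b c d (K*x + L*x') (K*y + L*y')"
proof -
  obtain i j k l where 1: "x = i*a + j*c + n*k" "y = i*b + j*d + n*l" using assms(1) inL2_def by auto
  obtain i' j' k' l' where 2: "x' = i'*a + j'*c + n*k'" "y' = i'*b + j'*d + n*l'" using assms(2) inL2_def by auto
  show ?thesis unfolding inL2_def
    by (rule exI[of _ "K*i+L*i'"], rule exI[of _ "K*j+L*j'"], rule exI[of _ "K*k+L*k'"],
        rule exI[of _ "K*l+L*l'"]) (simp add: 1 2 algebra_simps)
qed

lemma L2_hnf: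
  assumes D: "a*d - b*c \<noteq> 0"
  shows "\<exists>g y0 m. g > 0 \<and> m > 0 \<and> g*m = \<bar>a*d - b*c\<bar> \<and> inL2 0 a b c d g y0 \<and> inL2 0 a b c d 0 m
     \<and> (\<forall>x y. inL2 0 a b c d x y \<longrightarrow> (\<exists>k l. x = k*g \<and> y = k*y0 + l*m))"
proof -
  define g where "g = gcd a c"
  have g0: "g > 0" unfolding g_def using D by (cases "a = 0") auto
  obtain u v where uv: "u*a + v*c = g" unfolding g_def using bezout_int by blast
  define a' where "a' = a div g"
  define c' where "c' = c div g"
  have aa: "a = g*a'" unfolding a'_def g_def by simp
  have cc: "c = g*c'" unfolding c'_def g_def by simp
  have uv': "u*a' + v*c' = 1" using uv g0 unfolding aa cc
    by (metis (no_types, opaque_lifting) distrib_left mult.left_commute mult_cancel_left1 less_irrefl)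
  define D' where "D' = a'*d - c'*b"
  have DD: "a*d - b*c = g*D'" unfolding D'_def aa cc by (simp add: algebra_simps)
  have D'0: "D' \<noteq> 0" using D DD by auto
  define y0 where "y0 = u*b + v*d"
  define m where "m = \<bar>D'\<bar>"
  have m0: "m > 0" using D'0 m_def by simp
  have gm: "g*m = \<bar>a*d - b*c\<bar>" unfolding DD m_def using g0 by (simp add: abs_mult)
  have Pg: "inL2 0 a b c d g y0" unfolding inL2_def y0_def using uv by auto
  have Pm: "inL2 0 a b c d 0 m"
  proof (cases "D' \<ge> 0")
    case True
    show ?thesis unfolding inL2_def
      by (rule exI[of _ "-c'"], rule exI[of _ "a'"]) (use True in \<open>simp add: m_def D'_def aa cc algebra_simps\<close>)
  next
    case False
    show ?thesis unfolding inL2_def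
      by (rule exI[of _ "c'"], rule exI[of _ "-a'"]) (use False in \<open>simp add: m_def D'_def aa cc algebra_simps\<close>)
  qed
  have dm: "D' dvd Y" if P: "inL2 0 a b c d 0 Y" for Y
  proof -
    obtain i j where ij: "0 = i*a + j*c" "Y = i*b + j*d" using P unfolding inL2_def by auto
    have h: "i*a' + j*c' = 0" using ij(1) g0 unfolding aa cc
      by (metis (no_types, lifting) distrib_left mult.left_commute mult_eq_0_iff less_irrefl)
    have e1: "Y*a' - j*D' = b*(i*a' + j*c')" unfolding ij(2) D'_def by algebra
    have e2: "Y*c' + i*D' = d*(i*a' + j*c')" unfolding ij(2) D'_def by algebra
    have e3: "Y = u*(Y*a') + v*(Y*c')" using uv' by algebra
    have "Y = D' * (u*j - v*i)" using e1 e2 e3 h by algebra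
    thus ?thesis by simp
  qed
  have char: "\<exists>k l. x = k*g \<and> y = k*y0 + l*m" if P: "inL2 0 a b c d x y" for x y
  proof -
    obtain i j where ij: "x = i*a + j*c" "y = i*b + j*d" using P unfolding inL2_def by auto
    define k where "k = i*a' + j*c'"
    have xk: "x = k*g" unfolding ij k_def aa cc by algebra
    have "inL2 0 a b c d (1*x + (-k)*g) (1*y + (-k)*y0)" by (rule inL2_comb[OF P Pg])
    hence "inL2 0 a b c d 0 (y - k*y0)" using xk by simp
    hence "D' dvd (y - k*y0)" by (rule dm)
    hence "m dvd (y - k*y0)" unfolding m_def by simp
    then obtain l where "y - k*y0 = m*l" by (auto elim: dvdE)
    hence "y = k*y0 + l*m" by (simp add: algebra_simps)
    thus ?thesis using xk by blast
  qed
  show ?thesis using g0 m0 gm Pg Pm char by blast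
qed

lemma L2_reps0:
  assumes D: "a*d - b*c \<noteq> 0"
  shows "\<exists>S. finite S \<and> card S = nat \<bar>a*d - b*c\<bar> \<and>
           (\<forall>x y. \<exists>!s. s \<in> S \<and> inL2 0 a b c d (x - fst s) (y - snd s))"
proof -
  obtain g y0 m where H: "g > 0" "m > 0" "g*m = \<bar>a*d - b*c\<bar>" "inL2 0 a b c d g y0" "inL2 0 a b c d 0 m"
     "\<And>x y. inL2 0 a b c d x y \<Longrightarrow> (\<exists>k l. x = k*g \<and> y = k*y0 + l*m)"
    using L2_hnf[OF D] by blast
  have dg: "g dvd x" if "inL2 0 a b c d x y" for x y using H(6)[OF that] by auto
  have dm: "m dvd y" if Q: "inL2 0 a b c d 0 y" for y
  proof -
    obtain k l where "0 = k*g" "y = k*y0 + l*m" using H(6)[OF Q] by auto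
    thus ?thesis using H(1) by simp
  qed
  have R: "\<forall>x y. \<exists>!s. s \<in> {0..<g} \<times> {0..<m} \<and> inL2 0 a b c d (x - fst s) (y - snd s)"
    by (intro allI hnf_reps[where P="inL2 0 a b c d", OF inL2_comb]) (use H(1,2,4,5) dg dm in blast)+
  have C: "card ({0..<g} \<times> {0..<m}) = nat \<bar>a*d - b*c\<bar>"
    using H(1,2) by (simp add: card_cartesian_product flip: H(3) nat_mult_distrib)
  show ?thesis by (intro exI[of _ "{0..<g} \<times> {0..<m}"] conjI R C) simp
qed

lemma par1:
  fixes i j a b c d :: int
  shows "even (i*a + j*c) \<Longrightarrow> odd a \<Longrightarrow> even (a*d - b*c) \<Longrightarrow> even (i*b + j*d)"
  by (auto simp: even_mult_iff)

lemma par2: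
  fixes i j a b c d :: int
  shows "even (i*a + j*c) \<Longrightarrow> odd c \<Longrightarrow> even (a*d - b*c) \<Longrightarrow> even (i*b + j*d)"
  by (auto simp: even_mult_iff)

lemma L2_reps2:
  shows "\<exists>S. finite S \<and> card S = (if even a \<and> even b \<and> even c \<and> even d then 4
                 else if even (a*d - b*c) then 2 else 1) \<and>
           (\<forall>x y. \<exists>!s. s \<in> S \<and> inL2 2 a b c d (x - fst s) (y - snd s))"
proof -
  have gen: "\<exists>S. finite S \<and> card S = nat (g*m) \<and>
           (\<forall>x y. \<exists>!s. s \<in> S \<and> inL2 2 a b c d (x - fst s) (y - snd s))"
    if "g > 0" "m > 0" "inL2 2 a b c d g y0" "inL2 2 a b c d 0 m"
       "\<And>x y. inL2 2 a b c d x y \<Longrightarrow> g dvd x" "\<And>y. inL2 2 a b c d 0 y \<Longrightarrow> m dvd y" for g m y0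
  proof -
    have R: "\<forall>x y. \<exists>!s. s \<in> {0..<g} \<times> {0..<m} \<and> inL2 2 a b c d (x - fst s) (y - snd s)"
      by (intro allI hnf_reps[where P="inL2 2 a b c d", OF inL2_comb]) (use that in blast)+
    have C: "card ({0..<g} \<times> {0..<m}) = nat (g*m)"
      using that(1,2) by (simp add: card_cartesian_product nat_mult_distrib)
    show ?thesis by (intro exI[of _ "{0..<g} \<times> {0..<m}"] conjI R C) simp
  qed
  have P20: "inL2 2 a b c d 2 0" unfolding inL2_def by (rule exI[of _ 0], rule exI[of _ 0], rule exI[of _ 1]) simp
  have P02: "inL2 2 a b c d 0 2" unfolding inL2_def by (rule exI[of _ 0], rule exI[of _ 0], rule exI[of _ 0]) simp
  show ?thesis
  proof (cases "even a \<and> even b \<and> even c \<and> even d")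
    case True
    have "\<exists>S. finite S \<and> card S = nat (2*2) \<and>
           (\<forall>x y. \<exists>!s. s \<in> S \<and> inL2 2 a b c d (x - fst s) (y - snd s))"
    proof (rule gen[OF _ _ P20 P02])
      show "2 dvd x" if "inL2 2 a b c d x y" for x y using that True unfolding inL2_def by auto
      show "2 dvd y" if "inL2 2 a b c d 0 y" for y using that True unfolding inL2_def by auto
    qed auto
    moreover have "(if even a \<and> even b \<and> even c \<and> even d then 4 else if even (a*d - b*c) then 2 else 1) = nat (2*2)" using True by simp
    ultimately show ?thesis by simp
  next
    case notall: False
    show ?thesis
    proof (cases "even (a*d - b*c)")
      case False
      then obtain K where K: "a*d - b*c = 2*K + 1" by (metis oddE)
      have P10: "inL2 2 a b c d 1 0" unfolding inL2_def
        by (rule exI[of _ d], rule exI[of _ "-b"], rule exI[of _ "-K"], rule exI[of _ 0])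
          (use K in \<open>simp add: algebra_simps\<close>)
      have P01: "inL2 2 a b c d 0 1" unfolding inL2_def
        by (rule exI[of _ "-c"], rule exI[of _ a], rule exI[of _ 0], rule exI[of _ "-K"])
          (use K in \<open>simp add: algebra_simps\<close>)
      have "\<exists>S. finite S \<and> card S = nat (1*1) \<and>
           (\<forall>x y. \<exists>!s. s \<in> S \<and> inL2 2 a b c d (x - fst s) (y - snd s))"
        by (rule gen[OF _ _ P10 P01]) auto
    moreover have "(if even a \<and> even b \<and> even c \<and> even d then 4 else if even (a*d - b*c) then 2 else 1) = nat (1*1)" using notall False by simp
    ultimately show ?thesis by simp
    next
      case Deven: True
      consider "odd a" | "odd c" | "even a" "even c" by blast
      thus ?thesis
      proof cases
        case 1
        then obtain K where K: "a = 2*K + 1" by (metis oddE)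
        have P1: "inL2 2 a b c d 1 b" unfolding inL2_def
          by (rule exI[of _ 1], rule exI[of _ 0], rule exI[of _ "-K"], rule exI[of _ 0])
            (use K in \<open>simp add: algebra_simps\<close>)
        have "\<exists>S. finite S \<and> card S = nat (1*2) \<and>
           (\<forall>x y. \<exists>!s. s \<in> S \<and> inL2 2 a b c d (x - fst s) (y - snd s))"
        proof (rule gen[OF _ _ P1 P02])
          show "2 dvd y" if Q: "inL2 2 a b c d 0 y" for y
          proof -
            obtain i j k l where "i*a + j*c + 2*k = 0" "y = i*b + j*d + 2*l"
              using Q unfolding inL2_def by auto
            moreover have "even (i*b + j*d)"
              proof (rule par1) have "i*a + j*c = 2*(-k)" using \<open>i*a + j*c + 2*k = 0\<close> by simp thus "even (i*a + j*c)" by simp qed (use 1 Deven in auto)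
            ultimately show ?thesis by simp
          qed
        qed auto
    moreover have "(if even a \<and> even b \<and> even c \<and> even d then 4 else if even (a*d - b*c) then 2 else 1) = nat (1*2)" using notall Deven by simp
    ultimately show ?thesis by simp
      next
        case 2
        then obtain K where K: "c = 2*K + 1" by (metis oddE)
        have P1: "inL2 2 a b c d 1 d" unfolding inL2_def
          by (rule exI[of _ 0], rule exI[of _ 1], rule exI[of _ "-K"], rule exI[of _ 0])
            (use K in \<open>simp add: algebra_simps\<close>)
        have "\<exists>S. finite S \<and> card S = nat (1*2) \<and>
           (\<forall>x y. \<exists>!s. s \<in> S \<and> inL2 2 a b c d (x - fst s) (y - snd s))"
        proof (rule gen[OF _ _ P1 P02])
          show "2 dvd y" if Q: "inL2 2 a b c d 0 y" for y
          proof -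
            obtain i j k l where "i*a + j*c + 2*k = 0" "y = i*b + j*d + 2*l"
              using Q unfolding inL2_def by auto
            moreover have "even (i*b + j*d)"
              proof (rule par2) have "i*a + j*c = 2*(-k)" using \<open>i*a + j*c + 2*k = 0\<close> by simp thus "even (i*a + j*c)" by simp qed (use 2 Deven in auto)
            ultimately show ?thesis by simp
          qed
        qed auto
    moreover have "(if even a \<and> even b \<and> even c \<and> even d then 4 else if even (a*d - b*c) then 2 else 1) = nat (1*2)" using notall Deven by simp
    ultimately show ?thesis by simp
      next
        case 3
        then obtain A C where AC: "a = 2*A" "c = 2*C" by (meson evenE)
        have "odd b \<or> odd d" using notall 3 by blast
        hence P01: "inL2 2 a b c d 0 1"
        proof
          assume "odd b" then obtain B where B: "b = 2*B+1" by (metis oddE)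
          show ?thesis unfolding inL2_def
            by (rule exI[of _ 1], rule exI[of _ 0], rule exI[of _ "-A"], rule exI[of _ "-B"])
              (use AC B in \<open>simp add: algebra_simps\<close>)
        next
          assume "odd d" then obtain B where B: "d = 2*B+1" by (metis oddE)
          show ?thesis unfolding inL2_def
            by (rule exI[of _ 0], rule exI[of _ 1], rule exI[of _ "-C"], rule exI[of _ "-B"])
              (use AC B in \<open>simp add: algebra_simps\<close>)
        qed
        have "\<exists>S. finite S \<and> card S = nat (2*1) \<and>
           (\<forall>x y. \<exists>!s. s \<in> S \<and> inL2 2 a b c d (x - fst s) (y - snd s))"
        proof (rule gen[OF _ _ P20 P01])
          show "2 dvd x" if "inL2 2 a b c d x y" for x y using that AC unfolding inL2_def by auto
        qed auto
    moreover have "(if even a \<and> even b \<and> even c \<and> even d then 4 else if even (a*d - b*c) then 2 else 1) = nat (2*1)" using notall Deven by simp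
    ultimately show ?thesis by simp
      qed
    qed
  qed
qed



lemma powi_lin:
  fixes T :: complex
  assumes "T \<noteq> 0"
  shows "T powi (k*x + l*x') = (T powi x) powi k * (T powi x') powi l"
proof -
  have "T powi (k*x + l*x') = T powi (x*k) * T powi (x'*l)" using assms by (simp add: power_int_add mult.commute)
  also have "\<dots> = (T powi x) powi k * (T powi x') powi l" by (simp only: power_int_mult)
  finally show ?thesis .
qed

lemma mon_comb:
  fixes T U :: complex
  assumes "T \<noteq> 0" "U \<noteq> 0"
  shows "T powi (k*x + l*x') * U powi (k*y + l*y') = (T powi x * U powi y) powi k * (T powi x' * U powi y') powi l"
  unfolding powi_lin[OF assms(1)] powi_lin[OF assms(2)] power_int_mult_distrib by (simp only: mult_ac)


definition Xp :: "int \<Rightarrow> int \<Rightarrow> int \<Rightarrow> int \<Rightarrow> (complex \<times> complex) set" where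
  "Xp a b c d = {(T,U). T \<noteq> 0 \<and> U \<noteq> 0 \<and> T powi a * U powi b = 1 \<and> T powi c * U powi d = 1}"

lemma card_Xp:
  assumes D: "a*d - b*c \<noteq> 0"
  shows "card (Xp a b c d) = nat \<bar>a*d - b*c\<bar>"
proof -
  obtain g y0 m where H: "g > 0" "m > 0" "g*m = \<bar>a*d - b*c\<bar>" "inL2 0 a b c d g y0" "inL2 0 a b c d 0 m"
     "\<And>x y. inL2 0 a b c d x y \<Longrightarrow> (\<exists>k l. x = k*g \<and> y = k*y0 + l*m)"
    using L2_hnf[OF D] by blast
  have fromgens: "T powi x * U powi y = 1" if TU: "T \<noteq> 0" "U \<noteq> 0" "T powi a * U powi b = 1" "T powi c * U powi d = 1"
     and P: "inL2 0 a b c d x y" for T U :: complex and x y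
  proof -
    obtain i j where ij: "x = i*a + j*c" "y = i*b + j*d" using P unfolding inL2_def by auto
    show ?thesis unfolding ij mon_comb[OF TU(1,2)] TU(3,4) by simp
  qed
  have tohnf: "T powi x * U powi y = 1" if TU: "T \<noteq> 0" "U \<noteq> 0" "T powi g * U powi y0 = 1" "U powi m = 1"
     and P: "inL2 0 a b c d x y" for T U :: complex and x y
  proof -
    obtain k l where kl: "x = k*g + l*0" "y = k*y0 + l*m" using H(6)[OF P] by auto
    have "T powi 0 * U powi m = 1" using TU by simp
    thus ?thesis unfolding kl mon_comb[OF TU(1,2)] TU(3) by simp
  qed
  have Pa: "inL2 0 a b c d a b" unfolding inL2_def by (rule exI[of _ 1], rule exI[of _ 0]) simp
  have Pc: "inL2 0 a b c d c d" unfolding inL2_def by (rule exI[of _ 0], rule exI[of _ 1]) simp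
  have eq: "Xp a b c d = prod.swap ` Sigma {U. U ^ nat m = 1} (\<lambda>U. {T. T ^ nat g = U powi (-y0)})" (is "_ = prod.swap ` ?S")
  proof (intro set_eqI iffI)
    fix z assume "z \<in> Xp a b c d"
    then obtain T U where z: "z = (T,U)" and TU: "T \<noteq> 0" "U \<noteq> 0" "T powi a * U powi b = 1" "T powi c * U powi d = 1"
      unfolding Xp_def by auto
    have 1: "T powi g * U powi y0 = 1" by (rule fromgens[OF TU H(4)])
    have "T powi 0 * U powi m = 1" by (rule fromgens[OF TU H(5)])
    hence "U ^ nat m = 1" using H(2) by (simp add: power_int_def)
    moreover have "T ^ nat g = U powi (-y0)"
    proof -
      have "inverse (U powi y0) = T powi g" using 1 by (intro inverse_unique) (simp add: mult.commute)
      moreover have "T powi g = T ^ nat g" using H(1) by (simp add: power_int_def)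
      ultimately show ?thesis by (simp add: power_int_minus)
    qed
    ultimately have "(U,T) \<in> ?S" by simp
    thus "z \<in> prod.swap ` ?S" unfolding z by force
  next
    fix z assume "z \<in> prod.swap ` ?S"
    then obtain T U where z: "z = (T,U)" and TU: "U ^ nat m = 1" "T ^ nat g = U powi (-y0)" by auto
    have U0: "U \<noteq> 0" using TU(1) H(2) by (auto simp: power_0_left)
    have T0: "T \<noteq> 0" using TU(2) H(1) U0 by (auto simp: power_0_left)
    have m1: "U powi m = 1" using TU(1) H(2) by (simp add: power_int_def)
    have g1: "T powi g * U powi y0 = 1"
    proof -
      have "T powi g = T ^ nat g" using H(1) by (simp add: power_int_def)
      hence "T powi g = inverse (U powi y0)" using TU(2) by (simp add: power_int_minus)
      thus ?thesis using U0 by simp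
    qed
    show "z \<in> Xp a b c d" unfolding z Xp_def using tohnf[OF T0 U0 g1 m1 Pa] tohnf[OF T0 U0 g1 m1 Pc] T0 U0 by simp
  qed
  have fin1: "finite {U::complex. U ^ nat m = 1}" using H(2) by (intro finite_roots_unity) simp
  have c1: "card {U::complex. U ^ nat m = 1} = nat m" using H(2) by (intro card_roots_unity_eq) simp
  have c2: "card {T::complex. T ^ nat g = U powi (-y0)} = nat g" if "U \<in> {U. U ^ nat m = 1}" for U
  proof -
    have "U \<noteq> 0" using that H(2) by (auto simp: power_0_left)
    hence "U powi (-y0) \<noteq> 0" by simp
    thus ?thesis using H(1) by (intro card_nth_roots) auto
  qed
  have "card ?S = (\<Sum>U\<in>{U. U ^ nat m = 1}. card {T::complex. T ^ nat g = U powi (-y0)})"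
    using fin1 c2 H(1) by (intro card_SigmaI) (auto intro: card_ge_0_finite)
  also have "\<dots> = nat m * nat g" using c1 c2 by simp
  also have "\<dots> = nat \<bar>a*d - b*c\<bar>" using H(1,2) by (simp flip: H(3) add: nat_mult_distrib)
  finally have "card ?S = nat \<bar>a*d - b*c\<bar>" .
  moreover have "card (prod.swap ` ?S) = card ?S" by (rule card_image) simp
  ultimately show ?thesis using eq by simp
qed



lemma ab_vec_append: "ab_vec (xs @ ys) g = ab_vec xs g + ab_vec ys g"
  by (simp add: ab_vec_def)

lemma ab_vec_gpow: "ab_vec (gpow G k) g = (if G = g then k else 0)"
  by (simp add: ab_vec_def gpow_def sum_list_replicate)

lemma ab_vec_commw: "ab_vec (commw a b) g = 0"
  by (simp add: ab_vec_def commw_def)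

definition inL4 :: "int \<Rightarrow> int \<Rightarrow> int \<Rightarrow> int \<Rightarrow> int \<Rightarrow> int \<Rightarrow> int \<Rightarrow> (gen \<Rightarrow> int) \<Rightarrow> bool" where
  "inL4 n p1 q1 p2 q2 p3 q3 v \<longleftrightarrow> (\<exists>x1 x2 x3 x4 u1 u2 u3 u4.
     v C1 = x1*p1 + x4 + n*u1 \<and> v C2 = x2*p2 + x4 + n*u2 \<and> v C3 = x3*p3 + x4 + n*u3 \<and>
     v H = x1*q1 + x2*q2 + x3*q3 + n*u4)"

lemma rel_char:
  "v \<in> rel_lattice n (seif_rels p1 q1 p2 q2 p3 q3) \<longleftrightarrow> inL4 (int n) p1 q1 p2 q2 p3 q3 v"
proof -
  have S: "(\<Sum>i<length (seif_rels p1 q1 p2 q2 p3 q3). c i * ab_vec (seif_rels p1 q1 p2 q2 p3 q3 ! i) g)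
     = c 3 * (if g = C1 then p1 else if g = H then q1 else 0)
     + c 4 * (if g = C2 then p2 else if g = H then q2 else 0)
     + c 5 * (if g = C3 then p3 else if g = H then q3 else 0)
     + c 6 * (if g = H then 0 else 1)" for c :: "nat \<Rightarrow> int" and g
    by (cases g) (simp_all add: seif_rels_def eval_nat_numeral ab_vec_append ab_vec_gpow ab_vec_commw,
        simp_all add: ab_vec_def)
  show ?thesis
  proof
    assume "v \<in> rel_lattice n (seif_rels p1 q1 p2 q2 p3 q3)"
    then obtain c u where v: "v = (\<lambda>g. (\<Sum>i<length (seif_rels p1 q1 p2 q2 p3 q3). c i * ab_vec (seif_rels p1 q1 p2 q2 p3 q3 ! i) g) + int n * u g)"
      unfolding rel_lattice_def by blast
    show "inL4 (int n) p1 q1 p2 q2 p3 q3 v" unfolding inL4_def v S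
      by (rule exI[of _ "c 3"], rule exI[of _ "c 4"], rule exI[of _ "c 5"], rule exI[of _ "c 6"],
          rule exI[of _ "u C1"], rule exI[of _ "u C2"], rule exI[of _ "u C3"], rule exI[of _ "u H"]) simp
  next
    assume "inL4 (int n) p1 q1 p2 q2 p3 q3 v"
    then obtain x1 x2 x3 x4 u1 u2 u3 u4 where x:
      "v C1 = x1*p1 + x4 + int n*u1" "v C2 = x2*p2 + x4 + int n*u2" "v C3 = x3*p3 + x4 + int n*u3"
      "v H = x1*q1 + x2*q2 + x3*q3 + int n*u4" unfolding inL4_def by blast
    define c :: "nat \<Rightarrow> int" where "c = (\<lambda>i. if i = 3 then x1 else if i = 4 then x2 else if i = 5 then x3 else if i = 6 then x4 else 0)"
    define u where "u = (\<lambda>g. case g of C1 \<Rightarrow> u1 | C2 \<Rightarrow> u2 | C3 \<Rightarrow> u3 | H \<Rightarrow> u4)"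
    have "v = (\<lambda>g. (\<Sum>i<length (seif_rels p1 q1 p2 q2 p3 q3). c i * ab_vec (seif_rels p1 q1 p2 q2 p3 q3 ! i) g) + int n * u g)"
    proof
      fix g show "v g = (\<Sum>i<length (seif_rels p1 q1 p2 q2 p3 q3). c i * ab_vec (seif_rels p1 q1 p2 q2 p3 q3 ! i) g) + int n * u g"
        unfolding S by (cases g) (simp_all add: x c_def u_def)
    qed
    thus "v \<in> rel_lattice n (seif_rels p1 q1 p2 q2 p3 q3)" unfolding rel_lattice_def by blast
  qed
qed



lemma quot_card:
  assumes eq: "equiv UNIV R" and fin: "finite S" and u: "\<And>v. \<exists>!s. s \<in> S \<and> (v,s) \<in> R"
  shows "card (UNIV // R) = card S"
proof -
  have self: "x \<in> R``{x}" for x using equiv_class_self[OF eq] by simp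
  have "bij_betw (\<lambda>s. R``{s}) S (UNIV // R)"
  proof (rule bij_betw_imageI)
    show "inj_on (\<lambda>s. R``{s}) S"
    proof (rule inj_onI)
      fix s s' assume s: "s \<in> S" "s' \<in> S" and e: "R``{s} = R``{s'}"
      have "s' \<in> R``{s}" using e self[of s'] by simp
      hence "(s, s') \<in> R" by simp
      moreover have "(s, s) \<in> R" using self[of s] by simp
      ultimately show "s = s'" using u[of s] s by blast
    qed
    show "(\<lambda>s. R``{s}) ` S = UNIV // R"
    proof
      show "(\<lambda>s. R``{s}) ` S \<subseteq> UNIV // R" by (auto simp: quotient_def)
      show "UNIV // R \<subseteq> (\<lambda>s. R``{s}) ` S"
      proof
        fix X assume "X \<in> UNIV // R"
        then obtain v where X: "X = R``{v}" by (auto simp: quotient_def)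
        obtain s where s: "s \<in> S" "(v,s) \<in> R" using u[of v] by blast
        have "R``{v} = R``{s}" using s(2) eq by (simp add: equiv_class_eq)
        thus "X \<in> (\<lambda>s. R``{s}) ` S" using X s(1) by blast
      qed
    qed
  qed
  thus ?thesis by (simp add: bij_betw_same_card)
qed

definition sig :: "int \<Rightarrow> int \<Rightarrow> int \<Rightarrow> int \<Rightarrow> gen \<Rightarrow> int" where
  "sig a1 b1 x y = (\<lambda>g. case g of C1 \<Rightarrow> -b1*x | C2 \<Rightarrow> y | C3 \<Rightarrow> 0 | H \<Rightarrow> a1*x)"

definition F1 :: "int \<Rightarrow> int \<Rightarrow> (gen \<Rightarrow> int) \<Rightarrow> int" where
  "F1 p1 q1 v = -q1*v C1 + p1*v H + q1*v C3"

definition F2 :: "(gen \<Rightarrow> int) \<Rightarrow> int" where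
  "F2 v = v C2 - v C3"

lemma key:
  assumes p1: "p1 \<ge> 1" and cop: "coprime p1 q1" and ab: "a1*p1 + b1*q1 = 1"
  shows "inL4 n p1 q1 p2 q2 p3 q3 v \<longleftrightarrow> inL2 n (p1*q2) p2 (p1*q3 + p3*q1) (-p3) (F1 p1 q1 v) (F2 v)"
proof
  assume A: "inL4 n p1 q1 p2 q2 p3 q3 v"
  obtain x1 x2 x3 x4 u1 u2 u3 u4 where x:
      "v C1 = x1*p1 + x4 + n*u1" "v C2 = x2*p2 + x4 + n*u2" "v C3 = x3*p3 + x4 + n*u3"
      "v H = x1*q1 + x2*q2 + x3*q3 + n*u4" using A unfolding inL4_def by (elim exE conjE) blast
  show "inL2 n (p1*q2) p2 (p1*q3 + p3*q1) (-p3) (F1 p1 q1 v) (F2 v)" unfolding inL2_def F1_def F2_def x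
    by (rule exI[of _ x2], rule exI[of _ x3], rule exI[of _ "-q1*u1 + p1*u4 + q1*u3"], rule exI[of _ "u2 - u3"])
      (intro conjI; algebra)
next
  assume A: "inL2 n (p1*q2) p2 (p1*q3 + p3*q1) (-p3) (F1 p1 q1 v) (F2 v)"
  obtain i j k l where h: "-q1*v C1 + p1*v H + q1*v C3 = i*(p1*q2) + j*(p1*q3 + p3*q1) + n*k"
     "v C2 - v C3 = i*p2 + j*(-p3) + n*l" using A unfolding inL2_def F1_def F2_def by (elim exE conjE) blast
  define w1 where "w1 = v C1 + n*b1*k"
  define w2 where "w2 = v C2 - i*p2 - n*l"
  define w3 where "w3 = v C3 - j*p3"
  define wh where "wh = v H - i*q2 - j*q3 - n*a1*k"
  have e1: "p1*wh = q1*(w1 - w3)"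
  proof -
    have "p1*wh - q1*(w1 - w3) = (-q1*v C1 + p1*v H + q1*v C3) - i*(p1*q2) - j*(p1*q3 + p3*q1) - n*k*(a1*p1 + b1*q1)"
      unfolding w1_def wh_def w3_def by (simp add: algebra_simps)
    also have "\<dots> = 0" using h(1) ab by simp
    finally show ?thesis by simp
  qed
  have e2: "w2 = w3" using h(2) unfolding w2_def w3_def by simp
  have "p1 dvd q1*(w1 - w3)" using e1 by (metis dvd_triv_left)
  hence "p1 dvd (w1 - w3)" using cop by (simp add: coprime_dvd_mult_right_iff)
  then obtain K where K: "w1 - w3 = p1*K" by (auto elim: dvdE)
  have "p1*wh = p1*(K*q1)" using e1 K by (simp add: algebra_simps)
  hence Kh: "wh = K*q1" using p1 by (simp add: mult.commute)
  have c1: "v C1 = K*p1 + w3 + n*(-b1*k)"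
  proof -
    have "n*(-b1*k) = -(n*b1*k)" "K*p1 = p1*K" by simp_all
    thus ?thesis using K w1_def by linarith
  qed
  have c2: "v C2 = i*p2 + w3 + n*l" using e2 w2_def by linarith
  have c3: "v C3 = j*p3 + w3 + n*0" using w3_def by simp
  have c4: "v H = K*q1 + i*q2 + j*q3 + n*(a1*k)"
  proof -
    have "n*(a1*k) = n*a1*k" by simp
    thus ?thesis using Kh wh_def by linarith
  qed
  show "inL4 n p1 q1 p2 q2 p3 q3 v" unfolding inL4_def
    by (rule exI[of _ K], rule exI[of _ i], rule exI[of _ j], rule exI[of _ w3],
        rule exI[of _ "-b1*k"], rule exI[of _ l], rule exI[of _ 0], rule exI[of _ "a1*k"]) (intro conjI c1 c2 c3 c4)
qed


lemma F1_diff: "F1 p1 q1 (v - w) = F1 p1 q1 v - F1 p1 q1 w" by (simp add: F1_def algebra_simps)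
lemma F2_diff: "F2 (v - w) = F2 v - F2 w" by (simp add: F2_def algebra_simps)

lemma H1_card_eq:
  fixes n :: nat
  assumes p1: "p1 \<ge> 1" and cop: "coprime p1 q1" and fin: "finite S2"
    and reps: "\<forall>x y. \<exists>!s. s \<in> S2 \<and> inL2 (int n) (p1*q2) p2 (p1*q3 + p3*q1) (-p3) (x - fst s) (y - snd s)"
  shows "H1_card n (seif_rels p1 q1 p2 q2 p3 q3) = card S2"
proof -
  obtain a1 b1 where ab: "a1*p1 + b1*q1 = 1"
    using bezout_int[of p1 q1] cop by (auto simp: coprime_iff_gcd_eq_1)
  define P where "P = inL2 (int n) (p1*q2) p2 (p1*q3 + p3*q1) (-p3)"
  define R where "R = {(v,w). v - w \<in> rel_lattice n (seif_rels p1 q1 p2 q2 p3 q3)}"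
  have Rc: "(v,w) \<in> R \<longleftrightarrow> P (F1 p1 q1 v - F1 p1 q1 w) (F2 v - F2 w)" for v w
    unfolding R_def P_def using rel_char key[OF p1 cop ab] by (simp add: F1_diff F2_diff)
  have P00: "P 0 0" unfolding P_def inL2_def by (rule exI[of _ 0], rule exI[of _ 0], rule exI[of _ 0], rule exI[of _ 0]) simp
  have Pc: "P (K*x + L*x') (K*y + L*y')" if "P x y" "P x' y'" for x y x' y' K L
    using inL2_comb that unfolding P_def by blast
  have eq: "equiv UNIV R"
  proof (rule equivI)
    show "refl R" unfolding refl_on_def using Rc P00 by simp
    show "sym R"
    proof (rule symI)
      fix v w assume "(v,w) \<in> R"
      hence "P (F1 p1 q1 v - F1 p1 q1 w) (F2 v - F2 w)" by (simp add: Rc)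
      from Pc[OF this this, of "-1" 0] show "(w,v) \<in> R" by (simp add: Rc)
    qed
    show "trans R"
    proof (rule transI)
      fix u v w assume "(u,v) \<in> R" "(v,w) \<in> R"
      hence "P (F1 p1 q1 u - F1 p1 q1 v) (F2 u - F2 v)" "P (F1 p1 q1 v - F1 p1 q1 w) (F2 v - F2 w)" by (simp_all add: Rc)
      from Pc[OF this, of 1 1] show "(u,w) \<in> R" by (simp add: Rc)
    qed
  qed auto
  define sg where "sg = (\<lambda>s. sig a1 b1 (fst s) (snd s))"
  have Fsg: "F1 p1 q1 (sg s) = fst s" "F2 (sg s) = snd s" for s
  proof -
    have "F1 p1 q1 (sg s) = fst s * (a1*p1 + b1*q1)" unfolding sg_def sig_def F1_def by (simp add: algebra_simps)
    thus "F1 p1 q1 (sg s) = fst s" using ab by simp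
    show "F2 (sg s) = snd s" unfolding sg_def sig_def F2_def by simp
  qed
  have inj: "inj_on sg S2"
  proof (rule inj_onI)
    fix s s' assume "sg s = sg s'"
    hence "F1 p1 q1 (sg s) = F1 p1 q1 (sg s')" "F2 (sg s) = F2 (sg s')" by simp_all
    thus "s = s'" unfolding Fsg by (simp add: prod_eq_iff)
  qed
  have u: "\<exists>!t. t \<in> sg ` S2 \<and> (v,t) \<in> R" for v
  proof -
    obtain s where s: "s \<in> S2" "P (F1 p1 q1 v - fst s) (F2 v - snd s)"
      using reps unfolding P_def by blast
    show ?thesis
    proof (rule ex1I[of _ "sg s"])
      show "sg s \<in> sg ` S2 \<and> (v, sg s) \<in> R" using s by (simp add: Rc Fsg)
    next
      fix t assume t: "t \<in> sg ` S2 \<and> (v, t) \<in> R"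
      then obtain s' where s': "s' \<in> S2" "t = sg s'" by blast
      have "P (F1 p1 q1 v - fst s') (F2 v - snd s')" using t s' by (simp add: Rc Fsg)
      hence "s' = s" using reps s s' unfolding P_def by blast
      thus "t = sg s" using s' by simp
    qed
  qed
  have "card (UNIV // R) = card (sg ` S2)" by (rule quot_card[OF eq]) (use fin u in auto)
  also have "\<dots> = card S2" by (rule card_image[OF inj])
  finally show ?thesis unfolding H1_card_def R_def .
qed



lemma word_val_append: "word_val a (xs @ ys) = word_val a xs * word_val a ys"
  by (simp add: word_val_def)

lemma word_val_gpow: "word_val a (gpow g k) = a g powi k"
  by (simp add: word_val_def gpow_def power_int_def prod_list_replicate)

lemma word_val_commw: "a x \<noteq> 0 \<Longrightarrow> a y \<noteq> 0 \<Longrightarrow> word_val a (commw x y) = 1"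
  by (simp add: word_val_def commw_def field_simps)

lemma word_val_inv: "word_val (\<lambda>g. inverse (a g)) w = inverse (word_val a w)"
  by (induction w) (auto simp: word_val_def inverse_mult_distrib mult.commute)

definition Xs :: "int \<Rightarrow> int \<Rightarrow> int \<Rightarrow> int \<Rightarrow> int \<Rightarrow> int \<Rightarrow> (gen \<Rightarrow> complex) set" where
  "Xs p1 q1 p2 q2 p3 q3 = {a. (\<forall>g. a g \<noteq> 0) \<and> a C1 powi p1 * a H powi q1 = 1 \<and> a C2 powi p2 * a H powi q2 = 1
      \<and> a C3 powi p3 * a H powi q3 = 1 \<and> a C1 * a C2 * a C3 = 1}"

lemma word_val_triple: "word_val a [(C1, False), (C2, False), (C3, False)] = a C1 * a C2 * a C3"
  by (simp add: word_val_def)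

lemma diag_rep_char:
  "diag_rep (seif_rels p1 q1 p2 q2 p3 q3) a d \<longleftrightarrow> a \<in> Xs p1 q1 p2 q2 p3 q3 \<and> d = (\<lambda>g. inverse (a g))"
proof
  assume A: "diag_rep (seif_rels p1 q1 p2 q2 p3 q3) a d"
  have ad: "a g * d g = 1" for g using A unfolding diag_rep_def by blast
  have nz: "a g \<noteq> 0" for g using ad[of g] by auto
  have d: "d = (\<lambda>g. inverse (a g))"
  proof (rule ext)
    fix g show "d g = inverse (a g)" using ad[of g] nz[of g] by (simp add: field_simps)
  qed
  have r: "word_val a r = 1" if "r \<in> set (seif_rels p1 q1 p2 q2 p3 q3)" for r using A that unfolding diag_rep_def by blast
  have "a \<in> Xs p1 q1 p2 q2 p3 q3"
    using r[of "gpow C1 p1 @ gpow H q1"] r[of "gpow C2 p2 @ gpow H q2"] r[of "gpow C3 p3 @ gpow H q3"]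
      r[of "[(C1, False), (C2, False), (C3, False)]"] nz
    unfolding Xs_def by (simp add: seif_rels_def word_val_append word_val_gpow word_val_triple)
  thus "a \<in> Xs p1 q1 p2 q2 p3 q3 \<and> d = (\<lambda>g. inverse (a g))" using d by blast
next
  assume A: "a \<in> Xs p1 q1 p2 q2 p3 q3 \<and> d = (\<lambda>g. inverse (a g))"
  hence nz: "a g \<noteq> 0" for g unfolding Xs_def by blast
  have r: "word_val a r = 1" if "r \<in> set (seif_rels p1 q1 p2 q2 p3 q3)" for r
    using that A nz unfolding Xs_def
    by (auto simp: seif_rels_def word_val_append word_val_gpow word_val_triple word_val_commw)
  show "diag_rep (seif_rels p1 q1 p2 q2 p3 q3) a d" unfolding diag_rep_def
    using A r nz by (simp add: word_val_inv)
qed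

definition chi :: "(gen \<Rightarrow> complex) \<Rightarrow> word \<Rightarrow> complex" where
  "chi a = (\<lambda>w. word_val a w + word_val (\<lambda>g. inverse (a g)) w)"

lemma abelian_chars_eq: "abelian_chars (seif_rels p1 q1 p2 q2 p3 q3) = chi ` Xs p1 q1 p2 q2 p3 q3"
  unfolding abelian_chars_def chi_def diag_rep_char by blast

lemma xinv_eq:
  fixes x y :: complex
  assumes "x \<noteq> 0" "y \<noteq> 0" "x + inverse x = y + inverse y"
  shows "y = x \<or> x * y = 1"
proof -
  have "(x - y) * (x*y - 1) = 0" using assms by (simp add: field_simps)
  thus ?thesis by auto
qed

lemma chi_eq:
  assumes na: "\<And>g. a g \<noteq> 0" and nb: "\<And>g. b g \<noteq> 0"
  shows "chi a = chi b \<longleftrightarrow> (b = a \<or> b = (\<lambda>g. inverse (a g)))"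
proof
  assume "b = a \<or> b = (\<lambda>g. inverse (a g))"
  thus "chi a = chi b" unfolding chi_def by (auto simp: word_val_inv)
next
  assume E: "chi a = chi b"
  have E1: "b g = a g \<or> a g * b g = 1" for g
  proof -
    have "chi a [(g,False)] = chi b [(g,False)]" using E by simp
    hence "a g + inverse (a g) = b g + inverse (b g)" unfolding chi_def word_val_def by simp
    thus ?thesis using xinv_eq[of "a g" "b g"] na[of g] nb[of g] by blast
  qed
  have E2: "b g * b h = a g * a h \<or> (a g * a h) * (b g * b h) = 1" for g h
  proof -
    have "chi a [(g,False),(h,False)] = chi b [(g,False),(h,False)]" using E by simp
    hence "a g * a h + inverse (a g * a h) = b g * b h + inverse (b g * b h)"
      unfolding chi_def word_val_def by (simp add: inverse_mult_distrib)
    moreover have "a g * a h \<noteq> 0" "b g * b h \<noteq> 0" using na nb by simp_all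
    ultimately show ?thesis using xinv_eq[of "a g * a h" "b g * b h"] by blast
  qed
  show "b = a \<or> b = (\<lambda>g. inverse (a g))"
  proof (rule ccontr)
    assume "\<not> ?thesis"
    hence "\<exists>g. b g \<noteq> a g" "\<exists>h. b h \<noteq> inverse (a h)" by (auto simp: fun_eq_iff)
    then obtain g h where g: "b g \<noteq> a g" and h: "b h \<noteq> inverse (a h)" by blast
    have g1: "a g * b g = 1" using E1[of g] g by blast
    have h1: "b h = a h" using E1[of h] h na[of h] by (auto simp: field_simps)
    from E2[of g h] show False
    proof
      assume "b g * b h = a g * a h"
      hence "b g = a g" using h1 na[of h] by simp
      thus False using g by simp
    next
      assume "(a g * a h) * (b g * b h) = 1"
      hence "(a g * b g) * (a h * b h) = 1" by (simp add: mult_ac)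
      hence "a h * b h = 1" using g1 by simp
      hence "b h = inverse (a h)" using na[of h] by (simp add: field_simps)
      thus False using h by simp
    qed
  qed
qed

lemma orbit_count:
  assumes fin: "finite X" and cl: "\<And>a. a \<in> X \<Longrightarrow> s a \<in> X" and inv: "\<And>a. a \<in> X \<Longrightarrow> s (s a) = a"
    and ch: "\<And>a b. a \<in> X \<Longrightarrow> b \<in> X \<Longrightarrow> f a = f b \<longleftrightarrow> (b = a \<or> b = s a)"
  shows "2 * card (f ` X) = card X + card {a\<in>X. s a = a}"
proof -
  define Fx where "Fx = {a\<in>X. s a = a}"
  define N where "N = X - Fx"
  have XFN: "X = Fx \<union> N" "Fx \<inter> N = {}" unfolding N_def Fx_def by auto
  have finF: "finite Fx" "finite N" using fin unfolding Fx_def N_def by auto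
  have cX: "card X = card Fx + card N" using XFN finF by (simp add: card_Un_disjoint)
  have disj: "f ` Fx \<inter> f ` N = {}"
  proof (rule ccontr)
    assume "f ` Fx \<inter> f ` N \<noteq> {}"
    then obtain a b where ab: "a \<in> Fx" "b \<in> N" "f a = f b" by auto
    hence "b = a \<or> b = s a" using ch[of a b] unfolding Fx_def N_def by auto
    thus False using ab unfolding Fx_def N_def by auto
  qed
  have injF: "inj_on f Fx"
  proof (rule inj_onI)
    fix a b assume "a \<in> Fx" "b \<in> Fx" "f a = f b"
    thus "a = b" using ch[of a b] unfolding Fx_def by auto
  qed
  have cN: "card N = 2 * card (f ` N)"
  proof -
    have "card N = (\<Sum>y\<in>f ` N. card {x\<in>N. f x = y})"
      using sum.image_gen[OF finF(2), of "\<lambda>_. 1::nat" f] by simp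
    also have "\<dots> = (\<Sum>y\<in>f ` N. 2)"
    proof (rule sum.cong[OF refl])
      fix y assume "y \<in> f ` N"
      then obtain a where a: "a \<in> N" "y = f a" by blast
      have aX: "a \<in> X" "s a \<noteq> a" using a unfolding N_def Fx_def by auto
      have saN: "s a \<in> N" using cl[OF aX(1)] inv[OF aX(1)] aX(2) unfolding N_def Fx_def by auto
      have "{x\<in>N. f x = y} = {a, s a}"
      proof
        show "{x\<in>N. f x = y} \<subseteq> {a, s a}"
        proof
          fix x assume "x \<in> {x\<in>N. f x = y}"
          hence "x \<in> X" "f a = f x" using a unfolding N_def by auto
          thus "x \<in> {a, s a}" using ch[of a x] aX by auto
        qed
        show "{a, s a} \<subseteq> {x\<in>N. f x = y}" using ch[of a "s a"] a aX saN cl[OF aX(1)] by auto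
      qed
      moreover have "a \<noteq> s a" using aX(2) by metis
      ultimately show "card {x\<in>N. f x = y} = 2" by simp
    qed
    finally show ?thesis by simp
  qed
  have "card (f ` X) = card (f ` Fx) + card (f ` N)"
    using XFN disj finF by (simp add: image_Un card_Un_disjoint)
  also have "card (f ` Fx) = card Fx" using injF by (rule card_image)
  finally show ?thesis using cX cN unfolding Fx_def by simp
qed



lemma pa: "(T::complex) \<noteq> 0 \<Longrightarrow> T powi m * T powi n = T powi (m + n)"
  by (simp add: power_int_add)

lemma pp: "((T::complex) powi m) powi n = T powi (m * n)"
  by (simp add: power_int_mult)

definition phi :: "int \<Rightarrow> int \<Rightarrow> complex \<times> complex \<Rightarrow> gen \<Rightarrow> complex" where
  "phi p1 q1 z = (\<lambda>g. case g of C1 \<Rightarrow> fst z powi (-q1) | C2 \<Rightarrow> snd z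
       | C3 \<Rightarrow> fst z powi q1 * inverse (snd z) | H \<Rightarrow> fst z powi p1)"

definition psi :: "int \<Rightarrow> int \<Rightarrow> (gen \<Rightarrow> complex) \<Rightarrow> complex \<times> complex" where
  "psi a1 b1 a = (a H powi a1 * a C1 powi (-b1), a C2)"

lemma psi_phi:
  assumes ab: "a1*p1 + b1*q1 = 1" and T: "T \<noteq> 0"
  shows "psi a1 b1 (phi p1 q1 (T,U)) = (T,U)"
proof -
  have "(T powi p1) powi a1 * (T powi (-q1)) powi (-b1) = T powi (p1*a1) * T powi ((-q1)*(-b1))"
    by (simp only: pp)
  also have "\<dots> = T powi (a1*p1 + b1*q1)" using T by (simp add: pa algebra_simps)
  also have "\<dots> = T" using ab by simp
  finally show ?thesis unfolding psi_def phi_def by simp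
qed

lemma phi_psi:
  assumes ab: "a1*p1 + b1*q1 = 1" and a: "a \<in> Xs p1 q1 p2 q2 p3 q3"
  shows "phi p1 q1 (psi a1 b1 a) = a"
proof -
  define x where "x = a C1"
  define h where "h = a H"
  define T where "T = h powi a1 * x powi (-b1)"
  have nz: "a g \<noteq> 0" for g using a unfolding Xs_def by blast
  have x0: "x \<noteq> 0" and h0: "h \<noteq> 0" unfolding x_def h_def using nz by auto
  have r1: "x powi p1 * h powi q1 = 1" using a unfolding Xs_def x_def h_def by blast
  have prod: "a C1 * a C2 * a C3 = 1" using a unfolding Xs_def by blast
  have e1: "x powi p1 = h powi (-q1)"
  proof -
    have "inverse (h powi q1) = x powi p1" using inverse_unique[of "h powi q1" "x powi p1"] r1 by (simp add: mult.commute)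
    hence "x powi p1 = inverse (h powi q1)" by simp
    thus ?thesis by (simp add: power_int_minus)
  qed
  have Tp1: "T powi p1 = h"
  proof -
    have "T powi p1 = (h powi a1) powi p1 * (x powi (-b1)) powi p1" unfolding T_def by (rule power_int_mult_distrib)
    also have "\<dots> = h powi (a1*p1) * (x powi p1) powi (-b1)" by (simp only: pp mult.commute)
    also have "\<dots> = h powi (a1*p1) * h powi ((-q1)*(-b1))" by (simp only: e1 pp)
    also have "\<dots> = h powi (a1*p1 + b1*q1)" using h0 by (simp add: pa algebra_simps)
    also have "\<dots> = h" using ab by simp
    finally show ?thesis .
  qed
  have Tq1: "T powi (-q1) = x"
  proof -
    have "T powi (-q1) = (h powi a1) powi (-q1) * (x powi (-b1)) powi (-q1)" unfolding T_def by (rule power_int_mult_distrib)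
    also have "\<dots> = (h powi (-q1)) powi a1 * x powi (b1*q1)" by (simp only: pp mult.commute) simp
    also have "\<dots> = x powi (p1*a1) * x powi (b1*q1)" by (simp only: e1 [symmetric] pp)
    also have "\<dots> = x powi (a1*p1 + b1*q1)" using x0 by (simp add: pa algebra_simps)
    also have "\<dots> = x" using ab by simp
    finally show ?thesis .
  qed
  have T0: "T \<noteq> 0" unfolding T_def using x0 h0 by simp
  have Tq1': "T powi q1 = inverse x"
  proof -
    have "T powi q1 = inverse (T powi (-q1))" by (simp add: power_int_minus)
    thus ?thesis using Tq1 by simp
  qed
  have c3: "a C3 = inverse x * inverse (a C2)"
    using prod x0 nz[of C2] unfolding x_def by (simp add: field_simps)
  show ?thesis
  proof (rule ext)
    fix g show "phi p1 q1 (psi a1 b1 a) g = a g"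
      by (cases g) (simp_all add: phi_def psi_def Tp1 Tq1 Tq1' c3 flip: T_def x_def h_def)
  qed
qed


lemma phi_in:
  assumes z: "z \<in> Xp (p1*q2) p2 (p1*q3 + p3*q1) (-p3)"
  shows "phi p1 q1 z \<in> Xs p1 q1 p2 q2 p3 q3"
proof -
  obtain T U where zz: "z = (T,U)" by force
  have T0: "T \<noteq> 0" and U0: "U \<noteq> 0" and r1: "T powi (p1*q2) * U powi p2 = 1"
    and r2: "T powi (p1*q3 + p3*q1) * U powi (-p3) = 1" using z unfolding zz Xp_def by auto
  have a1: "(T powi (-q1)) powi p1 * (T powi p1) powi q1 = 1"
    using T0 by (simp add: pp pa)
  have a2: "U powi p2 * (T powi p1) powi q2 = 1" using r1 by (simp add: pp mult.commute)
  have a3: "(T powi q1 * inverse U) powi p3 * (T powi p1) powi q3 = 1"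
  proof -
    have "(T powi q1 * inverse U) powi p3 * (T powi p1) powi q3 = T powi (q1*p3) * T powi (p1*q3) * U powi (-p3)"
      by (simp add: power_int_mult_distrib pp power_int_inverse power_int_minus mult_ac)
    also have "\<dots> = T powi (p1*q3 + p3*q1) * U powi (-p3)" using T0 by (simp add: pa algebra_simps)
    finally show ?thesis using r2 by simp
  qed
  have a4: "T powi (-q1) * U * (T powi q1 * inverse U) = 1"
    using T0 U0 by (simp add: power_int_minus field_simps)
  have nz: "\<forall>g. phi p1 q1 (T,U) g \<noteq> 0" using T0 U0 unfolding phi_def by (auto split: gen.split)
  show ?thesis unfolding Xs_def zz using nz a1 a2 a3 a4 by (simp add: phi_def)
qed

lemma psi_in:
  assumes ab: "a1*p1 + b1*q1 = 1" and a: "a \<in> Xs p1 q1 p2 q2 p3 q3"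
  shows "psi a1 b1 a \<in> Xp (p1*q2) p2 (p1*q3 + p3*q1) (-p3)"
proof -
  have E: "phi p1 q1 (psi a1 b1 a) = a" by (rule phi_psi[OF ab a])
  obtain T U where tu: "psi a1 b1 a = (T,U)" by force
  have nz: "a g \<noteq> 0" for g using a unfolding Xs_def by blast
  have T0: "T \<noteq> 0" using tu nz unfolding psi_def by auto
  have U0: "U \<noteq> 0" using tu nz unfolding psi_def by auto
  have aC2: "a C2 = U" and aH: "a H = T powi p1" and aC3: "a C3 = T powi q1 * inverse U"
    using E unfolding tu phi_def by (auto dest: fun_cong[where x=C2] fun_cong[where x=H] fun_cong[where x=C3])
  have r2: "a C2 powi p2 * a H powi q2 = 1" and r3: "a C3 powi p3 * a H powi q3 = 1"
    using a unfolding Xs_def by auto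
  have 1: "T powi (p1*q2) * U powi p2 = 1" using r2 unfolding aC2 aH by (simp add: pp mult.commute)
  have "T powi (p1*q3 + p3*q1) * U powi (-p3) = T powi (q1*p3) * T powi (p1*q3) * U powi (-p3)"
    using T0 by (simp add: pa algebra_simps)
  also have "\<dots> = a C3 powi p3 * a H powi q3" unfolding aC3 aH
    by (simp add: power_int_mult_distrib pp power_int_inverse power_int_minus mult_ac)
  finally have 2: "T powi (p1*q3 + p3*q1) * U powi (-p3) = 1" using r3 by simp
  show ?thesis unfolding tu Xp_def using T0 U0 1 2 by simp
qed

lemma bij_phi:
  assumes ab: "a1*p1 + b1*q1 = 1"
  shows "bij_betw (phi p1 q1) (Xp (p1*q2) p2 (p1*q3 + p3*q1) (-p3)) (Xs p1 q1 p2 q2 p3 q3)"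
proof (rule bij_betw_byWitness[where f'="psi a1 b1"])
  show "\<forall>z\<in>Xp (p1*q2) p2 (p1*q3 + p3*q1) (-p3). psi a1 b1 (phi p1 q1 z) = z"
    using psi_phi[OF ab] unfolding Xp_def by auto
  show "\<forall>a\<in>Xs p1 q1 p2 q2 p3 q3. phi p1 q1 (psi a1 b1 a) = a" using phi_psi[OF ab] by blast
  show "phi p1 q1 ` Xp (p1*q2) p2 (p1*q3 + p3*q1) (-p3) \<subseteq> Xs p1 q1 p2 q2 p3 q3" using phi_in by blast
  show "psi a1 b1 ` Xs p1 q1 p2 q2 p3 q3 \<subseteq> Xp (p1*q2) p2 (p1*q3 + p3*q1) (-p3)" using psi_in[OF ab] by blast
qed

lemma sq_powi: "(T::complex)^2 = 1 \<Longrightarrow> (T powi k)^2 = 1"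
proof -
  assume "T^2 = 1"
  hence "T*T = 1" by (simp add: power2_eq_square)
  hence "(T*T) powi k = 1" by simp
  thus ?thesis by (simp add: power2_eq_square power_int_mult_distrib)
qed

lemma bij_phi_fix:
  assumes ab: "a1*p1 + b1*q1 = 1"
  shows "bij_betw (phi p1 q1) {z\<in>Xp (p1*q2) p2 (p1*q3 + p3*q1) (-p3). (fst z)^2 = 1 \<and> (snd z)^2 = 1}
            {a\<in>Xs p1 q1 p2 q2 p3 q3. \<forall>g. (a g)^2 = 1}"
proof (rule bij_betw_byWitness[where f'="psi a1 b1"])
  show "\<forall>z\<in>{z\<in>Xp (p1*q2) p2 (p1*q3 + p3*q1) (-p3). (fst z)^2 = 1 \<and> (snd z)^2 = 1}. psi a1 b1 (phi p1 q1 z) = z"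
    using psi_phi[OF ab] unfolding Xp_def by auto
  show "\<forall>a\<in>{a\<in>Xs p1 q1 p2 q2 p3 q3. \<forall>g. (a g)^2 = 1}. phi p1 q1 (psi a1 b1 a) = a" using phi_psi[OF ab] by blast
  show "phi p1 q1 ` {z\<in>Xp (p1*q2) p2 (p1*q3 + p3*q1) (-p3). (fst z)^2 = 1 \<and> (snd z)^2 = 1}
      \<subseteq> {a\<in>Xs p1 q1 p2 q2 p3 q3. \<forall>g. (a g)^2 = 1}"
  proof
    fix y assume "y \<in> phi p1 q1 ` {z\<in>Xp (p1*q2) p2 (p1*q3 + p3*q1) (-p3). (fst z)^2 = 1 \<and> (snd z)^2 = 1}"
    then obtain T U where z: "(T,U) \<in> Xp (p1*q2) p2 (p1*q3 + p3*q1) (-p3)" "T^2 = 1" "U^2 = 1" "y = phi p1 q1 (T,U)"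
      by force
    have T2: "T^2 = 1" and U2: "U^2 = 1" using z by auto
    have "(phi p1 q1 (T,U) g)^2 = 1" for g
    proof (cases g)
      case C3
      have "(T powi q1 * inverse U)^2 = (T powi q1)^2 * inverse (U^2)" by (simp add: power_mult_distrib power_inverse)
      thus ?thesis using C3 sq_powi[OF T2] U2 unfolding phi_def by simp
    qed (use sq_powi[OF T2] U2 in \<open>simp_all add: phi_def\<close>)
    thus "y \<in> {a\<in>Xs p1 q1 p2 q2 p3 q3. \<forall>g. (a g)^2 = 1}" using phi_in[OF z(1)] z(4) by blast
  qed
  show "psi a1 b1 ` {a\<in>Xs p1 q1 p2 q2 p3 q3. \<forall>g. (a g)^2 = 1}
      \<subseteq> {z\<in>Xp (p1*q2) p2 (p1*q3 + p3*q1) (-p3). (fst z)^2 = 1 \<and> (snd z)^2 = 1}"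
  proof
    fix y assume "y \<in> psi a1 b1 ` {a\<in>Xs p1 q1 p2 q2 p3 q3. \<forall>g. (a g)^2 = 1}"
    then obtain a where a: "a \<in> Xs p1 q1 p2 q2 p3 q3" "\<forall>g. (a g)^2 = 1" and y: "y = psi a1 b1 a" by blast
    have "(a H powi a1 * a C1 powi (-b1))^2 = (a H powi a1)^2 * (a C1 powi (-b1))^2" by (simp add: power_mult_distrib)
    also have "\<dots> = 1" using sq_powi a(2) by simp
    finally have "(fst (psi a1 b1 a))^2 = 1" "(snd (psi a1 b1 a))^2 = 1" using a(2) unfolding psi_def by auto
    thus "y \<in> {z\<in>Xp (p1*q2) p2 (p1*q3 + p3*q1) (-p3). (fst z)^2 = 1 \<and> (snd z)^2 = 1}"
      using psi_in[OF ab a(1)] y by blast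
  qed
qed



lemma m1powi: "((-1::complex) powi k) = (if even k then 1 else -1)"
  by (simp add: power_int_minus_left)

lemma card_Fixp:
  "card {z\<in>Xp a b c d. (fst z)^2 = 1 \<and> (snd z)^2 = 1} =
     (if even a \<and> even b \<and> even c \<and> even d then 4 else if even (a*d - b*c) then 2 else 1)"
proof -
  define P where "P = (\<lambda>z::complex\<times>complex. fst z powi a * snd z powi b = 1 \<and> fst z powi c * snd z powi d = 1)"
  define A :: "(complex\<times>complex) set" where "A = {(1,1),(1,-1),(-1,1),(-1,-1)}"
  have "{z\<in>Xp a b c d. (fst z)^2 = 1 \<and> (snd z)^2 = 1} = {z\<in>A. P z}"
    unfolding Xp_def A_def P_def by (auto simp: power2_eq_1_iff)
  hence "card {z\<in>Xp a b c d. (fst z)^2 = 1 \<and> (snd z)^2 = 1} = (\<Sum>z\<in>A. if P z then 1 else 0)"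
    using sum.inter_filter[of A "\<lambda>_. 1::nat" P] by (simp add: A_def)
  also have "\<dots> = (1::nat) + (if even b \<and> even d then 1 else 0) + (if even a \<and> even c then 1 else 0)
       + (if even (a + b) \<and> even (c + d) then 1 else 0)"
    unfolding A_def P_def by (simp add: m1powi)
  also have "\<dots> = (if even a \<and> even b \<and> even c \<and> even d then 4 else if even (a*d - b*c) then 2 else 1)"
    by (cases "even a"; cases "even b"; cases "even c"; cases "even d") auto
  finally show ?thesis .
qed


lemma Xs_inv: "a \<in> Xs p1 q1 p2 q2 p3 q3 \<Longrightarrow> (\<lambda>g. inverse (a g)) \<in> Xs p1 q1 p2 q2 p3 q3"
  unfolding Xs_def by (simp add: power_int_inverse flip: inverse_mult_distrib)

lemma coprime_not_both_even: "coprime (x::int) y \<Longrightarrow> even x \<Longrightarrow> even y \<Longrightarrow> False"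
proof -
  assume "coprime x y" "even x" "even y"
  hence d: "2 dvd gcd x y" by (intro gcd_greatest) auto
  have "gcd x y = 1" using \<open>coprime x y\<close> by (simp add: coprime_iff_gcd_eq_1)
  hence "(2::int) dvd 1" using d by (simp only:)
  thus False by simp
qed

theorem lemma5p2:
  fixes p1 p2 p3 q1 q2 q3 :: int
  assumes "p1 \<ge> 1" and "p2 \<ge> 1" and "p3 \<ge> 1"
    and "coprime p1 q1" and "coprime p2 q2" and "coprime p3 q3"
    and "of_int q1 / of_int p1 + of_int q2 / of_int p2 + of_int q3 / of_int p3 \<noteq> (0::real)"
  defines "R \<equiv> seif_rels p1 q1 p2 q2 p3 q3"
    and "e \<equiv> of_int q1 / of_int p1 + of_int q2 / of_int p2 + of_int q3 / of_int p3 :: real"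
  shows "real (card (abelian_chars R)) = (real (H1_card 0 R) + real (H1_card 2 R)) / 2
    \<and> int (H1_card 0 R) = \<bar>p1 * p2 * q3 + p1 * q2 * p3 + q1 * p2 * p3\<bar>
    \<and> real (H1_card 0 R) = real_of_int (p1 * p2 * p3) * \<bar>e\<bar>
    \<and> H1_card 2 R =
           (if 2 dvd p1 \<and> 2 dvd p2 \<and> 2 dvd p3 then 4
            else if 2 dvd \<bar>p1 * p2 * q3 + p1 * q2 * p3 + q1 * p2 * p3\<bar> then 2
            else 1)"
proof -
  define D where "D = p1 * p2 * q3 + p1 * q2 * p3 + q1 * p2 * p3"
  define \<alpha> where "\<alpha> = p1*q2"
  define \<beta> where "\<beta> = p2"
  define \<gamma> where "\<gamma> = p1*q3 + p3*q1"
  define \<delta> where "\<delta> = -p3"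
  have Del: "\<alpha>*\<delta> - \<beta>*\<gamma> = -D" unfolding D_def \<alpha>_def \<beta>_def \<gamma>_def \<delta>_def by (simp add: algebra_simps)
  have pos: "real_of_int p1 > 0" "real_of_int p2 > 0" "real_of_int p3 > 0" using assms(1-3) by auto
  have eD: "real_of_int (p1*p2*p3) * e = real_of_int D"
    unfolding e_def D_def using pos by (simp add: field_simps)
  have e0: "e \<noteq> 0" using assms(7) unfolding e_def .
  have D0: "D \<noteq> 0"
  proof
    assume "D = 0"
    hence "real_of_int (p1*p2*p3) * e = 0" using eD by simp
    thus False using e0 pos by simp
  qed
  have Del0: "\<alpha>*\<delta> - \<beta>*\<gamma> \<noteq> 0" using Del D0 by simp
  obtain a1 b1 where ab: "a1*p1 + b1*q1 = 1"
    using bezout_int[of p1 q1] assms(4) by (auto simp: coprime_iff_gcd_eq_1)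
  obtain S0 where S0: "finite S0" "card S0 = nat \<bar>\<alpha>*\<delta> - \<beta>*\<gamma>\<bar>"
      "\<forall>x y. \<exists>!s. s \<in> S0 \<and> inL2 0 \<alpha> \<beta> \<gamma> \<delta> (x - fst s) (y - snd s)"
    using L2_reps0[OF Del0] by blast
  have H0: "H1_card 0 R = nat \<bar>D\<bar>"
  proof -
    have "H1_card 0 R = card S0" unfolding R_def
      by (rule H1_card_eq[OF assms(1,4) S0(1)]) (use S0(3) in \<open>simp add: \<alpha>_def \<beta>_def \<gamma>_def \<delta>_def\<close>)
    thus ?thesis using S0(2) Del by simp
  qed
  define F where "F = (if even \<alpha> \<and> even \<beta> \<and> even \<gamma> \<and> even \<delta> then 4 else if even (\<alpha>*\<delta> - \<beta>*\<gamma>) then 2 else (1::nat))"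
  obtain S2 where S2: "finite S2" "card S2 = F"
      "\<forall>x y. \<exists>!s. s \<in> S2 \<and> inL2 2 \<alpha> \<beta> \<gamma> \<delta> (x - fst s) (y - snd s)"
    using L2_reps2[of \<alpha> \<beta> \<gamma> \<delta>] unfolding F_def by blast
  have H2: "H1_card 2 R = F"
  proof -
    have "H1_card 2 R = card S2" unfolding R_def
      by (rule H1_card_eq[OF assms(1,4) S2(1)]) (use S2(3) in \<open>simp add: \<alpha>_def \<beta>_def \<gamma>_def \<delta>_def\<close>)
    thus ?thesis using S2(2) by simp
  qed
  have par: "(even \<alpha> \<and> even \<beta> \<and> even \<gamma> \<and> even \<delta>) \<longleftrightarrow> (2 dvd p1 \<and> 2 dvd p2 \<and> 2 dvd p3)"
  proof
    assume A: "even \<alpha> \<and> even \<beta> \<and> even \<gamma> \<and> even \<delta>"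
    hence ev: "even p2" "even p3" unfolding \<beta>_def \<delta>_def by auto
    have "even p1"
    proof (rule ccontr)
      assume "odd p1"
      hence "even q2" using A unfolding \<alpha>_def by (auto simp: even_mult_iff)
      thus False using coprime_not_both_even[OF assms(5) ev(1)] by simp
    qed
    thus "2 dvd p1 \<and> 2 dvd p2 \<and> 2 dvd p3" using ev by simp
  next
    assume "2 dvd p1 \<and> 2 dvd p2 \<and> 2 dvd p3"
    thus "even \<alpha> \<and> even \<beta> \<and> even \<gamma> \<and> even \<delta>" unfolding \<alpha>_def \<beta>_def \<gamma>_def \<delta>_def by auto
  qed
  have F_eq: "F = (if 2 dvd p1 \<and> 2 dvd p2 \<and> 2 dvd p3 then 4 else if 2 dvd \<bar>D\<bar> then 2 else 1)"
    unfolding F_def par Del by simp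
  have bij: "bij_betw (phi p1 q1) (Xp \<alpha> \<beta> \<gamma> \<delta>) (Xs p1 q1 p2 q2 p3 q3)"
    unfolding \<alpha>_def \<beta>_def \<gamma>_def \<delta>_def by (rule bij_phi[OF ab])
  have bijF: "bij_betw (phi p1 q1) {z\<in>Xp \<alpha> \<beta> \<gamma> \<delta>. (fst z)^2 = 1 \<and> (snd z)^2 = 1}
            {a\<in>Xs p1 q1 p2 q2 p3 q3. \<forall>g. (a g)^2 = 1}"
    unfolding \<alpha>_def \<beta>_def \<gamma>_def \<delta>_def by (rule bij_phi_fix[OF ab])
  have cXp: "card (Xp \<alpha> \<beta> \<gamma> \<delta>) = nat \<bar>D\<bar>" using card_Xp[OF Del0] Del by simp
  have finXp: "finite (Xp \<alpha> \<beta> \<gamma> \<delta>)" using cXp D0 by (intro card_ge_0_finite) simp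
  have finX: "finite (Xs p1 q1 p2 q2 p3 q3)" using bij_betw_finite[OF bij] finXp by simp
  have cX: "card (Xs p1 q1 p2 q2 p3 q3) = nat \<bar>D\<bar>" using bij_betw_same_card[OF bij] cXp by simp
  have cFix: "card {a\<in>Xs p1 q1 p2 q2 p3 q3. \<forall>g. (a g)^2 = 1} = F"
    using bij_betw_same_card[OF bijF] card_Fixp[of \<alpha> \<beta> \<gamma> \<delta>] unfolding F_def by simp
  have fixeq: "{a\<in>Xs p1 q1 p2 q2 p3 q3. (\<lambda>g. inverse (a g)) = a} = {a\<in>Xs p1 q1 p2 q2 p3 q3. \<forall>g. (a g)^2 = 1}"
  proof -
    have "((\<lambda>g. inverse (a g)) = a) \<longleftrightarrow> (\<forall>g. (a g)^2 = 1)" if "a \<in> Xs p1 q1 p2 q2 p3 q3" for a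
    proof -
      have nz: "a g \<noteq> 0" for g using that unfolding Xs_def by blast
      have "inverse (a g) = a g \<longleftrightarrow> (a g)^2 = 1" for g
        using nz[of g] by (auto simp: power2_eq_square field_simps)
      thus ?thesis by (simp add: fun_eq_iff)
    qed
    thus ?thesis by blast
  qed
  have oc: "2 * card (chi ` Xs p1 q1 p2 q2 p3 q3) = card (Xs p1 q1 p2 q2 p3 q3)
      + card {a\<in>Xs p1 q1 p2 q2 p3 q3. (\<lambda>g. inverse (a g)) = a}"
  proof (rule orbit_count[OF finX])
    show "\<And>a. a \<in> Xs p1 q1 p2 q2 p3 q3 \<Longrightarrow> (\<lambda>g. inverse (a g)) \<in> Xs p1 q1 p2 q2 p3 q3" by (rule Xs_inv)
    show "\<And>a. a \<in> Xs p1 q1 p2 q2 p3 q3 \<Longrightarrow> (\<lambda>g. inverse (inverse (a g))) = a" by simp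
    show "\<And>a b. a \<in> Xs p1 q1 p2 q2 p3 q3 \<Longrightarrow> b \<in> Xs p1 q1 p2 q2 p3 q3 \<Longrightarrow>
        chi a = chi b \<longleftrightarrow> (b = a \<or> b = (\<lambda>g. inverse (a g)))"
      by (rule chi_eq) (auto simp: Xs_def)
  qed
  have AC: "2 * card (abelian_chars R) = H1_card 0 R + H1_card 2 R"
    using oc unfolding R_def abelian_chars_eq fixeq cFix cX by (simp add: H0[unfolded R_def] H2[unfolded R_def])
  have part1: "real (card (abelian_chars R)) = (real (H1_card 0 R) + real (H1_card 2 R)) / 2"
  proof -
    have "real (2 * card (abelian_chars R)) = real (H1_card 0 R + H1_card 2 R)" using AC by simp
    thus ?thesis by simp
  qed
  have part3: "real (H1_card 0 R) = real_of_int (p1 * p2 * p3) * \<bar>e\<bar>"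
  proof -
    have "real (H1_card 0 R) = \<bar>real_of_int D\<bar>" using H0 by simp
    also have "\<dots> = \<bar>real_of_int (p1*p2*p3) * e\<bar>" using eD by simp
    also have "\<dots> = real_of_int (p1*p2*p3) * \<bar>e\<bar>" using pos by (simp add: abs_mult)
    finally show ?thesis .
  qed
  show ?thesis using part1 part3 H0 H2 F_eq unfolding D_def by simp
qed


end
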